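(* Let $\rho=0.4353184958$, $\tau=0.1230440086$, $\varepsilon=2\times 10^{-10}$ and $U=\{q\in\mathbb{C}:\ \mathrm{Re}\,q\in[\rho-\varepsilon,\rho+\varepsilon],\ \mathrm{Im}\,q\in[\tau-\varepsilon,\tau+\varepsilon]\}$. Let $5\leq n\leq\infty$ and let $r=(r_5,r_6,\ldots)$ (indices $5\leq j\leq n$) with each $r_j\in[0,1]$, and define $$\theta_r(q,z)=1+qz+q^3z^2+q^6z^3+q^{10}z^4+\sum_{j=5}^{n}r_jq^{j(j+1)/2}z^j.$$ Then for every $q\in U$ and every $z\in\mathbb{C}$ with $|z|=|q|^{-2}$ one has $\theta_r(q,z)\neq 0$.
   Context: Here $\rho,\tau$ are the given rational (finite decimal) numbers. *)

theory Defs
  imports Complex_Main "HOL-Library.Extended_Nat"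
begin

definition theta_r :: "(nat \<Rightarrow> real) \<Rightarrow> enat \<Rightarrow> complex \<Rightarrow> complex \<Rightarrow> complex" where
  "theta_r r n q z = 1 + q * z + q ^ 3 * z ^ 2 + q ^ 6 * z ^ 3 + q ^ 10 * z ^ 4 +
     (\<Sum>j. if 5 \<le> j \<and> enat j \<le> n
           then complex_of_real (r j) * q ^ (j * (j + 1) div 2) * z ^ j else 0)"

definition rho :: real where "rho = 0.4353184958"
definition tau :: real where "tau = 0.1230440086"
definition eps :: real where "eps = 2 / 10 ^ 10"

definition U :: "complex set" where
  "U = {q. Re q \<in> {rho - eps .. rho + eps} \<and> Im q \<in> {tau - eps .. tau + eps}}"

end

theory Submission imports Defs begin
definition "a0 = (435/1000::real)"
definition "b0 = (123/1000::real)"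
definition "C3 = a0^3 - 3*a0*b0^2"
definition "S3 = 3*a0^2*b0 - b0^3"
definition "q1 = Complex a0 b0"
definition G :: "complex \<Rightarrow> complex" where "G w = q1 + w + w^2 + q1*w^3 + q1^3*w^4"
definition Gd :: "complex \<Rightarrow> complex" where "Gd w = 1 + 2*w + 3*q1*w^2 + 4*q1^3*w^3"
definition GR :: "real \<Rightarrow> real \<Rightarrow> real" where
 "GR x y = a0 + x + (x^2-y^2) + (a0*(x^3-3*x*y^2) - b0*(3*x^2*y-y^3)) + (C3*(x^4-6*x^2*y^2+y^4) - S3*(4*x^3*y-4*x*y^3))"
definition GI :: "real \<Rightarrow> real \<Rightarrow> real" where
 "GI x y = b0 + y + 2*x*y + (a0*(3*x^2*y-y^3) + b0*(x^3-3*x*y^2)) + (C3*(4*x^3*y-4*x*y^3) + S3*(x^4-6*x^2*y^2+y^4))"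
definition GdR :: "real \<Rightarrow> real \<Rightarrow> real" where
 "GdR x y = 1 + 2*x + 3*(a0*(x^2-y^2) - b0*(2*x*y)) + 4*(C3*(x^3-3*x*y^2) - S3*(3*x^2*y - y^3))"
definition GdI :: "real \<Rightarrow> real \<Rightarrow> real" where
 "GdI x y = 2*y + 3*(a0*(2*x*y) + b0*(x^2-y^2)) + 4*(C3*(3*x^2*y-y^3) + S3*(x^3-3*x*y^2))"

lemma q1_cube: "q1^3 = Complex C3 S3"
  by (simp add: q1_def C3_def S3_def complex_eq_iff power2_eq_square power3_eq_cube algebra_simps)

lemma pow_C: "Complex x y ^ 2 = Complex (x^2-y^2) (2*x*y)"
  "Complex x y ^ 3 = Complex (x^3-3*x*y^2) (3*x^2*y-y^3)"
  "Complex x y ^ 4 = Complex (x^4-6*x^2*y^2+y^4) (4*x^3*y-4*x*y^3)"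
  by (simp_all add: complex_eq_iff power2_eq_square power3_eq_cube power4_eq_xxxx algebra_simps)

lemma G_C: "G (Complex x y) = Complex (GR x y) (GI x y)"
  unfolding G_def q1_cube pow_C by (simp add: q1_def GR_def GI_def complex_eq_iff algebra_simps)

lemma Gd_C: "Gd (Complex x y) = Complex (GdR x y) (GdI x y)"
  unfolding Gd_def q1_cube pow_C by (simp add: q1_def GdR_def GdI_def complex_eq_iff algebra_simps)

lemma taylor: "G w = G c + (w-c)*Gd c + (w-c)^2 * (1 + q1*(w+2*c) + q1^3*(w^2+2*w*c+3*c^2))"
  unfolding G_def Gd_def by algebra

lemma cmod_le_sq: "0 \<le> t \<Longrightarrow> Re z ^2 + Im z^2 \<le> t^2 \<Longrightarrow> cmod z \<le> t"
  by (metis cmod_power2 power2_le_imp_le)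
lemma cmod_ge_sq: "0 \<le> t \<Longrightarrow> t^2 \<le> Re z^2 + Im z^2 \<Longrightarrow> t \<le> cmod z"
  using norm_complex_def real_le_rsqrt by presburger

lemma q1_norm: "cmod q1 \<le> 46/100"
  by (rule cmod_le_sq) (simp_all add: q1_def a0_def b0_def power_divide)
lemma q3_norm: "cmod (q1^3) \<le> 1/10"
proof -
  have "cmod (q1^3) = cmod q1 ^ 3" by (simp add: norm_power)
  also have "\<dots> \<le> (46/100)^3" by (rule power_mono[OF q1_norm]) simp
  also have "\<dots> \<le> 1/10" by (simp add: power_divide)
  finally show ?thesis .
qed

lemma tri3: "norm (x+y+(z::'a::real_normed_vector)) \<le> norm x + norm y + norm z"
  using norm_triangle_ineq[of "x+y" z] norm_triangle_ineq[of x y] by linarith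

lemma S_bound:
  assumes w: "cmod w = 1" and c: "cmod c \<le> 6/5"
  shows "cmod (1 + q1*(w+2*c) + q1^3*(w^2+2*w*c+3*c^2)) \<le> 36/10"
proof -
  have c0: "0 \<le> cmod c" by simp
  have n1: "cmod (w+2*c) \<le> 1 + 2*(6/5)"
    using norm_triangle_ineq[of w "2*c"] w c by (simp add: norm_mult)
  have n2: "cmod (w^2+2*w*c+3*c^2) \<le> 1 + 2*(6/5) + 3*(6/5)^2"
  proof -
    have "cmod (w^2+2*w*c+3*c^2) \<le> cmod (w^2) + cmod (2*w*c) + cmod (3*c^2)"
      by (rule tri3)
    also have "\<dots> = 1 + 2 * cmod c + 3 * cmod c ^ 2" using w by (simp add: norm_mult norm_power)
    also have "\<dots> \<le> 1 + 2*(6/5) + 3*(6/5)^2"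
      using c c0 by (intro add_mono mult_left_mono power_mono) auto
    finally show ?thesis .
  qed
  have "cmod (1 + q1*(w+2*c) + q1^3*(w^2+2*w*c+3*c^2)) \<le> 1 + cmod q1 * cmod (w+2*c) + cmod (q1^3) * cmod (w^2+2*w*c+3*c^2)"
    using tri3[of 1 "q1*(w+2*c)" "q1^3*(w^2+2*w*c+3*c^2)"] by (simp add: norm_mult)
  also have "\<dots> \<le> 1 + (46/100) * (1 + 2*(6/5)) + (1/10) * (1 + 2*(6/5) + 3*(6/5)^2)"
    using q1_norm q3_norm n1 n2 by (intro add_mono mult_mono) auto
  also have "\<dots> \<le> 36/10" by (simp add: power_divide)
  finally show ?thesis .
qed

lemma sq_mid: "a \<le> (x::real) \<Longrightarrow> x \<le> b \<Longrightarrow> (x - (a+b)/2)^2 \<le> (b-a)^2/4"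
proof -
  assume "a \<le> x" "x \<le> b"
  then have "0 \<le> (x-a)*(b-x)" by simp
  moreover have "(x - (a+b)/2)^2 = (b-a)^2/4 - (x-a)*(b-x)"
    by (simp add: power2_eq_square field_simps)
  ultimately show ?thesis by linarith
qed

lemma rect:
  assumes w: "cmod w = 1" and "a \<le> Re w" "Re w \<le> b" "yl \<le> Im w" "Im w \<le> yh"
    and h: "(b-a)^2/4 + (yh-yl)^2/4 \<le> h^2" "0 \<le> h" "h \<le> 1/5"
    and g: "0 \<le> g" "GdR ((a+b)/2) ((yl+yh)/2) ^ 2 + GdI ((a+b)/2) ((yl+yh)/2) ^ 2 \<le> g^2"
    and m: "0 \<le> m + g*h + 36/10*h^2" "(m + g*h + 36/10*h^2)^2 \<le> GR ((a+b)/2) ((yl+yh)/2) ^ 2 + GI ((a+b)/2) ((yl+yh)/2) ^ 2"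
  shows "m \<le> cmod (G w)"
proof -
  define c where "c = Complex ((a+b)/2) ((yl+yh)/2)"
  have "(Re w - (a+b)/2)^2 \<le> (b-a)^2/4"
    using assms(2,3) by (rule sq_mid)
  moreover have "(Im w - (yl+yh)/2)^2 \<le> (yh-yl)^2/4"
    using assms(4,5) by (rule sq_mid)
  ultimately have wc: "cmod (w - c) \<le> h"
    using h by (intro cmod_le_sq) (auto simp: c_def)
  have cn: "cmod c \<le> 6/5"
    using norm_triangle_ineq2[of c w] w wc h norm_minus_commute[of w c] by linarith
  have Gdc: "cmod (Gd c) \<le> g" unfolding c_def Gd_C using g by (intro cmod_le_sq) auto
  have Gc: "m + g*h + 36/10*h^2 \<le> cmod (G c)" unfolding c_def G_C using m by (intro cmod_ge_sq) auto
  define S where "S = 1 + q1*(w+2*c) + q1^3*(w^2+2*w*c+3*c^2)"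
  have Sb: "cmod S \<le> 36/10" unfolding S_def by (rule S_bound[OF w cn])
  have eq: "G w = G c + (w-c)*Gd c + (w-c)^2 * S" unfolding S_def by (rule taylor)
  have "cmod ((w-c)*Gd c) \<le> h * g"
    unfolding norm_mult using wc Gdc h by (intro mult_mono) auto
  moreover have "cmod ((w-c)^2 * S) \<le> h^2 * (36/10)"
    unfolding norm_mult norm_power using wc Sb h by (intro mult_mono power_mono) auto
  moreover have "cmod (G c) \<le> cmod (G w) + cmod ((w-c)*Gd c) + cmod ((w-c)^2 * S)"
    using eq norm_triangle_ineq4 norm_triangle_ineq
    by (smt (verit, ccfv_threshold) add_diff_cancel_left' norm_diff_ineq)
  ultimately show ?thesis using Gc by (smt (verit) mult.commute)
qed

lemma ycov:
  fixes x y :: real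
  assumes e: "x^2 + y^2 = 1" and y0: "0 \<le> y" and ax: "a \<le> x" and xb: "x \<le> b"
    and l: "0 \<le> yl" "yl^2 + a^2 \<le> 1" "yl^2 + b^2 \<le> 1"
    and u: "0 \<le> yh" "(0 \<le> a \<and> 1 \<le> yh^2 + a^2) \<or> (b \<le> 0 \<and> 1 \<le> yh^2 + b^2) \<or> 1 \<le> yh^2"
  shows "yl \<le> Im (Complex x y) \<and> Im (Complex x y) \<le> yh"
proof -
  have "x^2 \<le> a^2 \<or> x^2 \<le> b^2"
  proof (cases "0 \<le> x")
    case True then show ?thesis using xb power_mono[of x b 2] by auto
  next
    case False then have "(-x)^2 \<le> (-a)^2" using ax by (intro power_mono) auto
    then show ?thesis by simp
  qed
  then have "yl^2 \<le> y^2" using e l by linarith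
  then have 1: "yl \<le> y" using y0 power2_le_imp_le by blast
  have "1 \<le> yh^2 + x^2"
    using u(2)
  proof (elim disjE conjE)
    assume "0 \<le> a" "1 \<le> yh^2 + a^2"
    moreover have "a^2 \<le> x^2" using \<open>0 \<le> a\<close> ax by (intro power_mono) auto
    ultimately show ?thesis by linarith
  next
    assume "b \<le> 0" "1 \<le> yh^2 + b^2"
    moreover have "(-b)^2 \<le> (-x)^2" using \<open>b \<le> 0\<close> xb by (intro power_mono) auto
    ultimately show ?thesis by simp
  next
    assume "1 \<le> yh^2" then show ?thesis by (simp add: add_increasing2)
  qed
  then have "y^2 \<le> yh^2" using e by linarith
  then have "y \<le> yh" using u(1) power2_le_imp_le by blast
  with 1 show ?thesis by simp
qed

lemma unit_sq: "cmod w = 1 \<Longrightarrow> Re w ^ 2 + Im w ^ 2 = 1"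
  by (metis cmod_power2 one_power2)

lemma cellXp:
  assumes "cmod w = 1 \<and> 0 \<le> Im w" "a \<le> Re w" "Re w \<le> b"
    and "0 \<le> yl" "yl^2 + a^2 \<le> 1" "yl^2 + b^2 \<le> 1"
    and "0 \<le> yh" "(0 \<le> a \<and> 1 \<le> yh^2 + a^2) \<or> (b \<le> 0 \<and> 1 \<le> yh^2 + b^2) \<or> 1 \<le> yh^2"
    and "(b-a)^2/4 + (yh-yl)^2/4 \<le> h^2" "0 \<le> h" "h \<le> 1/5"
    and "0 \<le> g" "GdR ((a+b)/2) ((yl+yh)/2) ^ 2 + GdI ((a+b)/2) ((yl+yh)/2) ^ 2 \<le> g^2"
    and "0 \<le> m + g*h + 36/10*h^2" "(m + g*h + 36/10*h^2)^2 \<le> GR ((a+b)/2) ((yl+yh)/2) ^ 2 + GI ((a+b)/2) ((yl+yh)/2) ^ 2"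
  shows "m \<le> cmod (G w)"
proof -
  have "yl \<le> Im (Complex (Re w) (Im w)) \<and> Im (Complex (Re w) (Im w)) \<le> yh"
    using assms(1-8) unit_sq[of w] by (intro ycov) auto
  then show ?thesis using assms by (intro rect[of w a b yl yh h g m]) auto
qed

lemma cellXn:
  assumes "cmod w = 1 \<and> Im w \<le> 0" "a \<le> Re w" "Re w \<le> b"
    and "0 \<le> yl" "yl^2 + a^2 \<le> 1" "yl^2 + b^2 \<le> 1"
    and "0 \<le> yh" "(0 \<le> a \<and> 1 \<le> yh^2 + a^2) \<or> (b \<le> 0 \<and> 1 \<le> yh^2 + b^2) \<or> 1 \<le> yh^2"
    and "(b-a)^2/4 + ((-yl)-(-yh))^2/4 \<le> h^2" "0 \<le> h" "h \<le> 1/5"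
    and "0 \<le> g" "GdR ((a+b)/2) ((-yh+-yl)/2) ^ 2 + GdI ((a+b)/2) ((-yh+-yl)/2) ^ 2 \<le> g^2"
    and "0 \<le> m + g*h + 36/10*h^2" "(m + g*h + 36/10*h^2)^2 \<le> GR ((a+b)/2) ((-yh+-yl)/2) ^ 2 + GI ((a+b)/2) ((-yh+-yl)/2) ^ 2"
  shows "m \<le> cmod (G w)"
proof -
  have "yl \<le> Im (Complex (Re w) (- Im w)) \<and> Im (Complex (Re w) (- Im w)) \<le> yh"
    using assms(1-8) unit_sq[of w] by (intro ycov) auto
  then show ?thesis using assms by (intro rect[of w a b "-yh" "-yl" h g m]) auto
qed

lemma cellYp:
  assumes "cmod w = 1 \<and> 0 \<le> Re w" "a \<le> Im w" "Im w \<le> b"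
    and "0 \<le> yl" "yl^2 + a^2 \<le> 1" "yl^2 + b^2 \<le> 1"
    and "0 \<le> yh" "(0 \<le> a \<and> 1 \<le> yh^2 + a^2) \<or> (b \<le> 0 \<and> 1 \<le> yh^2 + b^2) \<or> 1 \<le> yh^2"
    and "(yh-yl)^2/4 + (b-a)^2/4 \<le> h^2" "0 \<le> h" "h \<le> 1/5"
    and "0 \<le> g" "GdR ((yl+yh)/2) ((a+b)/2) ^ 2 + GdI ((yl+yh)/2) ((a+b)/2) ^ 2 \<le> g^2"
    and "0 \<le> m + g*h + 36/10*h^2" "(m + g*h + 36/10*h^2)^2 \<le> GR ((yl+yh)/2) ((a+b)/2) ^ 2 + GI ((yl+yh)/2) ((a+b)/2) ^ 2"
  shows "m \<le> cmod (G w)"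
proof -
  have "yl \<le> Im (Complex (Im w) (Re w)) \<and> Im (Complex (Im w) (Re w)) \<le> yh"
    using assms(1-8) unit_sq[of w] by (intro ycov) (auto simp: add.commute)
  then show ?thesis using assms by (intro rect[of w yl yh a b h g m]) auto
qed

lemma cellYn:
  assumes "cmod w = 1 \<and> Re w \<le> 0" "a \<le> Im w" "Im w \<le> b"
    and "0 \<le> yl" "yl^2 + a^2 \<le> 1" "yl^2 + b^2 \<le> 1"
    and "0 \<le> yh" "(0 \<le> a \<and> 1 \<le> yh^2 + a^2) \<or> (b \<le> 0 \<and> 1 \<le> yh^2 + b^2) \<or> 1 \<le> yh^2"
    and "((-yl)-(-yh))^2/4 + (b-a)^2/4 \<le> h^2" "0 \<le> h" "h \<le> 1/5"
    and "0 \<le> g" "GdR ((-yh+-yl)/2) ((a+b)/2) ^ 2 + GdI ((-yh+-yl)/2) ((a+b)/2) ^ 2 \<le> g^2"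
    and "0 \<le> m + g*h + 36/10*h^2" "(m + g*h + 36/10*h^2)^2 \<le> GR ((-yh+-yl)/2) ((a+b)/2) ^ 2 + GI ((-yh+-yl)/2) ((a+b)/2) ^ 2"
  shows "m \<le> cmod (G w)"
proof -
  have "yl \<le> Im (Complex (Im w) (- Re w)) \<and> Im (Complex (Im w) (- Re w)) \<le> yh"
    using assms(1-8) unit_sq[of w] by (intro ycov) (auto simp: add.commute)
  then show ?thesis using assms by (intro rect[of w "-yh" "-yl" a b h g m]) auto
qed

lemma glue:
  assumes "\<And>w. P w \<Longrightarrow> (a::real) \<le> f w \<Longrightarrow> f w \<le> b \<Longrightarrow> Q w"
      "\<And>w. P w \<Longrightarrow> b \<le> f w \<Longrightarrow> f w \<le> c \<Longrightarrow> Q w"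
  shows "P w \<Longrightarrow> a \<le> f w \<Longrightarrow> f w \<le> c \<Longrightarrow> Q w"
  using assms by (cases "f w \<le> b") auto



lemma c0: "cmod w = 1 \<and> 0 \<le> Im w \<Longrightarrow> (-4/5) \<le> Re w \<Longrightarrow> Re w \<le> (-3/5) \<Longrightarrow> 12/1000 \<le> cmod (G w)"
  by (rule cellXp[where a="(-4/5)" and b="(-3/5)" and yl="(3/5)" and yh="(4/5)" and h="(71/500)" and g="(49/100)"]) (simp_all add: GR_def GI_def GdR_def GdI_def C3_def S3_def a0_def b0_def power2_eq_square power3_eq_cube power4_eq_xxxx)

lemma c1: "cmod w = 1 \<and> 0 \<le> Im w \<Longrightarrow> (-3/5) \<le> Re w \<Longrightarrow> Re w \<le> (-2/5) \<Longrightarrow> 12/1000 \<le> cmod (G w)"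
  by (rule cellXp[where a="(-3/5)" and b="(-2/5)" and yl="(4/5)" and yh="(23/25)" and h="(117/1000)" and g="(7/10)"]) (simp_all add: GR_def GI_def GdR_def GdI_def C3_def S3_def a0_def b0_def power2_eq_square power3_eq_cube power4_eq_xxxx)

lemma c2: "cmod w = 1 \<and> 0 \<le> Im w \<Longrightarrow> (-2/5) \<le> Re w \<Longrightarrow> Re w \<le> (-1/5) \<Longrightarrow> 12/1000 \<le> cmod (G w)"
  by (rule cellXp[where a="(-2/5)" and b="(-1/5)" and yl="(91/100)" and yh="(49/50)" and h="(53/500)" and g="(93/100)"]) (simp_all add: GR_def GI_def GdR_def GdI_def C3_def S3_def a0_def b0_def power2_eq_square power3_eq_cube power4_eq_xxxx)

lemma c3: "cmod w = 1 \<and> 0 \<le> Im w \<Longrightarrow> (-1/5) \<le> Re w \<Longrightarrow> Re w \<le> (0/1) \<Longrightarrow> 12/1000 \<le> cmod (G w)"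
  by (rule cellXp[where a="(-1/5)" and b="(0/1)" and yl="(97/100)" and yh="(1/1)" and h="(51/500)" and g="(121/100)"]) (simp_all add: GR_def GI_def GdR_def GdI_def C3_def S3_def a0_def b0_def power2_eq_square power3_eq_cube power4_eq_xxxx)

lemma c4: "cmod w = 1 \<and> 0 \<le> Im w \<Longrightarrow> (0/1) \<le> Re w \<Longrightarrow> Re w \<le> (1/5) \<Longrightarrow> 12/1000 \<le> cmod (G w)"
  by (rule cellXp[where a="(0/1)" and b="(1/5)" and yl="(97/100)" and yh="(1/1)" and h="(51/500)" and g="(157/100)"]) (simp_all add: GR_def GI_def GdR_def GdI_def C3_def S3_def a0_def b0_def power2_eq_square power3_eq_cube power4_eq_xxxx)

lemma c5: "cmod w = 1 \<and> 0 \<le> Im w \<Longrightarrow> (1/5) \<le> Re w \<Longrightarrow> Re w \<le> (2/5) \<Longrightarrow> 12/1000 \<le> cmod (G w)"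
  by (rule cellXp[where a="(1/5)" and b="(2/5)" and yl="(91/100)" and yh="(49/50)" and h="(53/500)" and g="(2/1)"]) (simp_all add: GR_def GI_def GdR_def GdI_def C3_def S3_def a0_def b0_def power2_eq_square power3_eq_cube power4_eq_xxxx)

lemma c6: "cmod w = 1 \<and> 0 \<le> Im w \<Longrightarrow> (2/5) \<le> Re w \<Longrightarrow> Re w \<le> (3/5) \<Longrightarrow> 12/1000 \<le> cmod (G w)"
  by (rule cellXp[where a="(2/5)" and b="(3/5)" and yl="(4/5)" and yh="(23/25)" and h="(117/1000)" and g="(253/100)"]) (simp_all add: GR_def GI_def GdR_def GdI_def C3_def S3_def a0_def b0_def power2_eq_square power3_eq_cube power4_eq_xxxx)

lemma c7: "cmod w = 1 \<and> 0 \<le> Im w \<Longrightarrow> (3/5) \<le> Re w \<Longrightarrow> Re w \<le> (4/5) \<Longrightarrow> 12/1000 \<le> cmod (G w)"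
  by (rule cellXp[where a="(3/5)" and b="(4/5)" and yl="(3/5)" and yh="(4/5)" and h="(71/500)" and g="(63/20)"]) (simp_all add: GR_def GI_def GdR_def GdI_def C3_def S3_def a0_def b0_def power2_eq_square power3_eq_cube power4_eq_xxxx)

lemma c8: "cmod w = 1 \<and> 0 \<le> Re w \<Longrightarrow> (-3/5) \<le> Im w \<Longrightarrow> Im w \<le> (-3/10) \<Longrightarrow> 12/1000 \<le> cmod (G w)"
  by (rule cellYp[where a="(-3/5)" and b="(-3/10)" and yl="(4/5)" and yh="(24/25)" and h="(17/100)" and g="(453/100)"]) (simp_all add: GR_def GI_def GdR_def GdI_def C3_def S3_def a0_def b0_def power2_eq_square power3_eq_cube power4_eq_xxxx)

lemma c9: "cmod w = 1 \<and> 0 \<le> Re w \<Longrightarrow> (-3/10) \<le> Im w \<Longrightarrow> Im w \<le> (0/1) \<Longrightarrow> 12/1000 \<le> cmod (G w)"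
  by (rule cellYp[where a="(-3/10)" and b="(0/1)" and yl="(19/20)" and yh="(1/1)" and h="(153/1000)" and g="(461/100)"]) (simp_all add: GR_def GI_def GdR_def GdI_def C3_def S3_def a0_def b0_def power2_eq_square power3_eq_cube power4_eq_xxxx)

lemma c10: "cmod w = 1 \<and> 0 \<le> Re w \<Longrightarrow> (0/1) \<le> Im w \<Longrightarrow> Im w \<le> (3/10) \<Longrightarrow> 12/1000 \<le> cmod (G w)"
  by (rule cellYp[where a="(0/1)" and b="(3/10)" and yl="(19/20)" and yh="(1/1)" and h="(153/1000)" and g="(219/50)"]) (simp_all add: GR_def GI_def GdR_def GdI_def C3_def S3_def a0_def b0_def power2_eq_square power3_eq_cube power4_eq_xxxx)

lemma c11: "cmod w = 1 \<and> 0 \<le> Re w \<Longrightarrow> (3/10) \<le> Im w \<Longrightarrow> Im w \<le> (3/5) \<Longrightarrow> 12/1000 \<le> cmod (G w)"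
  by (rule cellYp[where a="(3/10)" and b="(3/5)" and yl="(4/5)" and yh="(24/25)" and h="(17/100)" and g="(77/20)"]) (simp_all add: GR_def GI_def GdR_def GdI_def C3_def S3_def a0_def b0_def power2_eq_square power3_eq_cube power4_eq_xxxx)

lemma c12: "cmod w = 1 \<and> Im w \<le> 0 \<Longrightarrow> (-4/5) \<le> Re w \<Longrightarrow> Re w \<le> (-7/10) \<Longrightarrow> 12/1000 \<le> cmod (G w)"
  by (rule cellXn[where a="(-4/5)" and b="(-7/10)" and yl="(3/5)" and yh="(18/25)" and h="(79/1000)" and g="(17/50)"]) (simp_all add: GR_def GI_def GdR_def GdI_def C3_def S3_def a0_def b0_def power2_eq_square power3_eq_cube power4_eq_xxxx)

lemma c13: "cmod w = 1 \<and> Im w \<le> 0 \<Longrightarrow> (-7/10) \<le> Re w \<Longrightarrow> Re w \<le> (-3/5) \<Longrightarrow> 12/1000 \<le> cmod (G w)"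
  by (rule cellXn[where a="(-7/10)" and b="(-3/5)" and yl="(71/100)" and yh="(4/5)" and h="(17/250)" and g="(27/50)"]) (simp_all add: GR_def GI_def GdR_def GdI_def C3_def S3_def a0_def b0_def power2_eq_square power3_eq_cube power4_eq_xxxx)

lemma c14: "cmod w = 1 \<and> Im w \<le> 0 \<Longrightarrow> (-3/5) \<le> Re w \<Longrightarrow> Re w \<le> (-2/5) \<Longrightarrow> 12/1000 \<le> cmod (G w)"
  by (rule cellXn[where a="(-3/5)" and b="(-2/5)" and yl="(4/5)" and yh="(23/25)" and h="(117/1000)" and g="(22/25)"]) (simp_all add: GR_def GI_def GdR_def GdI_def C3_def S3_def a0_def b0_def power2_eq_square power3_eq_cube power4_eq_xxxx)

lemma c15: "cmod w = 1 \<and> Im w \<le> 0 \<Longrightarrow> (-2/5) \<le> Re w \<Longrightarrow> Re w \<le> (-1/5) \<Longrightarrow> 12/1000 \<le> cmod (G w)"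
  by (rule cellXn[where a="(-2/5)" and b="(-1/5)" and yl="(91/100)" and yh="(49/50)" and h="(53/500)" and g="(137/100)"]) (simp_all add: GR_def GI_def GdR_def GdI_def C3_def S3_def a0_def b0_def power2_eq_square power3_eq_cube power4_eq_xxxx)

lemma c16: "cmod w = 1 \<and> Im w \<le> 0 \<Longrightarrow> (-1/5) \<le> Re w \<Longrightarrow> Re w \<le> (0/1) \<Longrightarrow> 12/1000 \<le> cmod (G w)"
  by (rule cellXn[where a="(-1/5)" and b="(0/1)" and yl="(97/100)" and yh="(1/1)" and h="(51/500)" and g="(19/10)"]) (simp_all add: GR_def GI_def GdR_def GdI_def C3_def S3_def a0_def b0_def power2_eq_square power3_eq_cube power4_eq_xxxx)

lemma c17: "cmod w = 1 \<and> Im w \<le> 0 \<Longrightarrow> (0/1) \<le> Re w \<Longrightarrow> Re w \<le> (1/5) \<Longrightarrow> 12/1000 \<le> cmod (G w)"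
  by (rule cellXn[where a="(0/1)" and b="(1/5)" and yl="(97/100)" and yh="(1/1)" and h="(51/500)" and g="(49/20)"]) (simp_all add: GR_def GI_def GdR_def GdI_def C3_def S3_def a0_def b0_def power2_eq_square power3_eq_cube power4_eq_xxxx)

lemma c18: "cmod w = 1 \<and> Im w \<le> 0 \<Longrightarrow> (1/5) \<le> Re w \<Longrightarrow> Re w \<le> (2/5) \<Longrightarrow> 12/1000 \<le> cmod (G w)"
  by (rule cellXn[where a="(1/5)" and b="(2/5)" and yl="(91/100)" and yh="(49/50)" and h="(53/500)" and g="(151/50)"]) (simp_all add: GR_def GI_def GdR_def GdI_def C3_def S3_def a0_def b0_def power2_eq_square power3_eq_cube power4_eq_xxxx)

lemma c19: "cmod w = 1 \<and> Im w \<le> 0 \<Longrightarrow> (2/5) \<le> Re w \<Longrightarrow> Re w \<le> (3/5) \<Longrightarrow> 12/1000 \<le> cmod (G w)"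
  by (rule cellXn[where a="(2/5)" and b="(3/5)" and yl="(4/5)" and yh="(23/25)" and h="(117/1000)" and g="(18/5)"]) (simp_all add: GR_def GI_def GdR_def GdI_def C3_def S3_def a0_def b0_def power2_eq_square power3_eq_cube power4_eq_xxxx)

lemma c20: "cmod w = 1 \<and> Im w \<le> 0 \<Longrightarrow> (3/5) \<le> Re w \<Longrightarrow> Re w \<le> (4/5) \<Longrightarrow> 12/1000 \<le> cmod (G w)"
  by (rule cellXn[where a="(3/5)" and b="(4/5)" and yl="(3/5)" and yh="(4/5)" and h="(71/500)" and g="(103/25)"]) (simp_all add: GR_def GI_def GdR_def GdI_def C3_def S3_def a0_def b0_def power2_eq_square power3_eq_cube power4_eq_xxxx)

lemma c21: "cmod w = 1 \<and> Re w \<le> 0 \<Longrightarrow> (-3/5) \<le> Im w \<Longrightarrow> Im w \<le> (-9/20) \<Longrightarrow> 12/1000 \<le> cmod (G w)"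
  by (rule cellYn[where a="(-3/5)" and b="(-9/20)" and yl="(4/5)" and yh="(9/10)" and h="(91/1000)" and g="(17/100)"]) (simp_all add: GR_def GI_def GdR_def GdI_def C3_def S3_def a0_def b0_def power2_eq_square power3_eq_cube power4_eq_xxxx)

lemma c22: "cmod w = 1 \<and> Re w \<le> 0 \<Longrightarrow> (-9/20) \<le> Im w \<Longrightarrow> Im w \<le> (-3/10) \<Longrightarrow> 12/1000 \<le> cmod (G w)"
  by (rule cellYn[where a="(-9/20)" and b="(-3/10)" and yl="(89/100)" and yh="(24/25)" and h="(83/1000)" and g="(9/100)"]) (simp_all add: GR_def GI_def GdR_def GdI_def C3_def S3_def a0_def b0_def power2_eq_square power3_eq_cube power4_eq_xxxx)

lemma c23: "cmod w = 1 \<and> Re w \<le> 0 \<Longrightarrow> (-3/10) \<le> Im w \<Longrightarrow> Im w \<le> (-3/20) \<Longrightarrow> 12/1000 \<le> cmod (G w)"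
  by (rule cellYn[where a="(-3/10)" and b="(-3/20)" and yl="(19/20)" and yh="(99/100)" and h="(39/500)" and g="(1/10)"]) (simp_all add: GR_def GI_def GdR_def GdI_def C3_def S3_def a0_def b0_def power2_eq_square power3_eq_cube power4_eq_xxxx)

lemma c24: "cmod w = 1 \<and> Re w \<le> 0 \<Longrightarrow> (-3/20) \<le> Im w \<Longrightarrow> Im w \<le> (0/1) \<Longrightarrow> 12/1000 \<le> cmod (G w)"
  by (rule cellYn[where a="(-3/20)" and b="(0/1)" and yl="(49/50)" and yh="(1/1)" and h="(19/250)" and g="(11/100)"]) (simp_all add: GR_def GI_def GdR_def GdI_def C3_def S3_def a0_def b0_def power2_eq_square power3_eq_cube power4_eq_xxxx)

lemma c25: "cmod w = 1 \<and> Re w \<le> 0 \<Longrightarrow> (0/1) \<le> Im w \<Longrightarrow> Im w \<le> (3/20) \<Longrightarrow> 12/1000 \<le> cmod (G w)"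
  by (rule cellYn[where a="(0/1)" and b="(3/20)" and yl="(49/50)" and yh="(1/1)" and h="(19/250)" and g="(13/100)"]) (simp_all add: GR_def GI_def GdR_def GdI_def C3_def S3_def a0_def b0_def power2_eq_square power3_eq_cube power4_eq_xxxx)

lemma c26: "cmod w = 1 \<and> Re w \<le> 0 \<Longrightarrow> (3/20) \<le> Im w \<Longrightarrow> Im w \<le> (3/10) \<Longrightarrow> 12/1000 \<le> cmod (G w)"
  by (rule cellYn[where a="(3/20)" and b="(3/10)" and yl="(19/20)" and yh="(99/100)" and h="(39/500)" and g="(4/25)"]) (simp_all add: GR_def GI_def GdR_def GdI_def C3_def S3_def a0_def b0_def power2_eq_square power3_eq_cube power4_eq_xxxx)

lemma c27: "cmod w = 1 \<and> Re w \<le> 0 \<Longrightarrow> (3/10) \<le> Im w \<Longrightarrow> Im w \<le> (9/20) \<Longrightarrow> 12/1000 \<le> cmod (G w)"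
  by (rule cellYn[where a="(3/10)" and b="(9/20)" and yl="(89/100)" and yh="(24/25)" and h="(83/1000)" and g="(23/100)"]) (simp_all add: GR_def GI_def GdR_def GdI_def C3_def S3_def a0_def b0_def power2_eq_square power3_eq_cube power4_eq_xxxx)

lemma c28: "cmod w = 1 \<and> Re w \<le> 0 \<Longrightarrow> (9/20) \<le> Im w \<Longrightarrow> Im w \<le> (3/5) \<Longrightarrow> 12/1000 \<le> cmod (G w)"
  by (rule cellYn[where a="(9/20)" and b="(3/5)" and yl="(4/5)" and yh="(9/10)" and h="(91/1000)" and g="(33/100)"]) (simp_all add: GR_def GI_def GdR_def GdI_def C3_def S3_def a0_def b0_def power2_eq_square power3_eq_cube power4_eq_xxxx)

lemma regXp: "cmod w = 1 \<and> 0 \<le> Im w \<Longrightarrow> (-4/5) \<le> Re w \<Longrightarrow> Re w \<le> (4/5) \<Longrightarrow> 12/1000 \<le> cmod (G w)"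
  by (rule glue[OF glue[OF glue[OF glue[OF glue[OF glue[OF glue[OF c0 c1] c2] c3] c4] c5] c6] c7])

lemma regYp: "cmod w = 1 \<and> 0 \<le> Re w \<Longrightarrow> (-3/5) \<le> Im w \<Longrightarrow> Im w \<le> (3/5) \<Longrightarrow> 12/1000 \<le> cmod (G w)"
  by (rule glue[OF glue[OF glue[OF c8 c9] c10] c11])

lemma regXn: "cmod w = 1 \<and> Im w \<le> 0 \<Longrightarrow> (-4/5) \<le> Re w \<Longrightarrow> Re w \<le> (4/5) \<Longrightarrow> 12/1000 \<le> cmod (G w)"
  by (rule glue[OF glue[OF glue[OF glue[OF glue[OF glue[OF glue[OF glue[OF c12 c13] c14] c15] c16] c17] c18] c19] c20])

lemma regYn: "cmod w = 1 \<and> Re w \<le> 0 \<Longrightarrow> (-3/5) \<le> Im w \<Longrightarrow> Im w \<le> (3/5) \<Longrightarrow> 12/1000 \<le> cmod (G w)"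
  by (rule glue[OF glue[OF glue[OF glue[OF glue[OF glue[OF glue[OF c21 c22] c23] c24] c25] c26] c27] c28])


lemma circle: "cmod w = 1 \<Longrightarrow> 12/1000 \<le> cmod (G w)"
proof -
  assume w: "cmod w = 1"
  have e: "Re w ^ 2 + Im w ^ 2 = 1" using unit_sq[OF w] .
  show ?thesis
  proof (cases "-4/5 \<le> Re w \<and> Re w \<le> 4/5")
    case True
    show ?thesis
    proof (cases "0 \<le> Im w")
      case True then show ?thesis using regXp[of w] w \<open>-4/5 \<le> Re w \<and> Re w \<le> 4/5\<close> by simp
    next
      case False then show ?thesis using regXn[of w] w \<open>-4/5 \<le> Re w \<and> Re w \<le> 4/5\<close> by simp
    qed
  next
    case False
    then have "4/5 < \<bar>Re w\<bar>" by auto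
    then have "(4/5)^2 < \<bar>Re w\<bar>^2" by (intro power_strict_mono) auto
    then have r2: "16/25 < Re w ^ 2" by (simp add: power2_eq_square)
    have "\<bar>Im w\<bar> < 3/5"
    proof (rule ccontr)
      assume "\<not> \<bar>Im w\<bar> < 3/5"
      then have "(3/5)^2 \<le> \<bar>Im w\<bar>^2" by (intro power_mono) auto
      then have "9/25 \<le> Im w ^ 2" by (simp add: power2_eq_square)
      with r2 e show False by linarith
    qed
    then have i: "-3/5 \<le> Im w" "Im w \<le> 3/5" by auto
    show ?thesis
    proof (cases "0 \<le> Re w")
      case True then show ?thesis using regYp[of w] w i by simp
    next
      case False then show ?thesis using regYn[of w] w i by simp
    qed
  qed
qed

definition F :: "complex \<Rightarrow> complex \<Rightarrow> complex" where
  "F q w = q + w + w^2 + q*w^3 + q^3*w^4"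

lemma q_bounds:
  assumes "q \<in> U"
  shows "cmod (q - q1) \<le> 37/100000" "cmod q \<le> 46/100" "cmod q ^ 2 \<le> 21/100" "0 < Re q"
proof -
  have re: "4353184958/10000000000 - 2/10^10 \<le> Re q" "Re q \<le> 4353184958/10000000000 + 2/10^10"
   and im: "1230440086/10000000000 - 2/10^10 \<le> Im q" "Im q \<le> 1230440086/10000000000 + 2/10^10"
    using assms unfolding U_def rho_def tau_def eps_def by auto
  have "cmod (q - q1) \<le> \<bar>Re (q - q1)\<bar> + \<bar>Im (q - q1)\<bar>" by (rule cmod_le)
  also have "\<dots> \<le> 32/100000 + 5/100000"
    using re im by (intro add_mono) (simp_all add: q1_def a0_def b0_def abs_le_iff)
  finally show "cmod (q - q1) \<le> 37/100000" by simp
  have "Re q ^ 2 \<le> (4354/10000)^2" using re by (intro power_mono) auto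
  moreover have "Im q ^ 2 \<le> (1231/10000)^2" using im by (intro power_mono) auto
  ultimately have s: "Re q ^ 2 + Im q ^ 2 \<le> 21/100" by (simp add: power_divide)
  then show "cmod q ^ 2 \<le> 21/100" by (simp add: cmod_power2)
  show "cmod q \<le> 46/100" using s by (intro cmod_le_sq) (auto simp: power_divide)
  show "0 < Re q" using re by simp
qed

lemma F_G:
  assumes "q \<in> U" "cmod w = 1"
  shows "cmod (F q w - G w) \<le> 1/1000"
proof -
  note qb = q_bounds[OF assms(1)]
  have eq: "F q w - G w = (q - q1) * ((1 + w^3) + (q^2 + q*q1 + q1^2)*w^4)"
    unfolding F_def G_def by algebra
  have n1: "cmod (1 + w^3) \<le> 2"
    using norm_triangle_ineq[of 1 "w^3"] assms(2) by (simp add: norm_power)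
  have "cmod (q^2 + q*q1 + q1^2) \<le> cmod q ^ 2 + cmod q * cmod q1 + cmod q1 ^ 2"
    using tri3[of "q^2" "q*q1" "q1^2"] by (simp add: norm_mult norm_power)
  also have "\<dots> \<le> (46/100)^2 + (46/100)*(46/100) + (46/100)^2"
    using qb(2) q1_norm by (intro add_mono mult_mono power_mono) auto
  finally have n2: "cmod (q^2 + q*q1 + q1^2) \<le> 64/100" by (simp add: power_divide)
  have "cmod ((1 + w^3) + (q^2 + q*q1 + q1^2)*w^4) \<le> 2 + 64/100"
    using norm_triangle_ineq[of "1 + w^3" "(q^2 + q*q1 + q1^2)*w^4"] n1 n2 assms(2)
    by (simp add: norm_mult norm_power)
  then have "cmod (F q w - G w) \<le> 37/100000 * (2 + 64/100)"
    unfolding eq norm_mult using qb(1) by (intro mult_mono) auto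
  then show ?thesis by simp
qed

lemma aux3: "(P::real) = A * B \<Longrightarrow> C * B = 1 \<Longrightarrow> 1 * P * C = A"
  by algebra

lemma tail_bound:
  fixes q z :: complex and r :: "nat \<Rightarrow> real" and n :: enat
  assumes r: "\<And>j. 5 \<le> j \<Longrightarrow> enat j \<le> n \<Longrightarrow> r j \<in> {0..1}"
    and q0: "0 < cmod q" and q1': "cmod q < 1" and z: "cmod z = 1 / (cmod q)^2"
  defines "f \<equiv> \<lambda>j. if 5 \<le> j \<and> enat j \<le> n then complex_of_real (r j) * q ^ (j * (j + 1) div 2) * z ^ j else 0"
  shows "cmod (suminf f) \<le> cmod q ^ 5 / (1 - cmod q ^ 4)"
proof -
  define x where "x = cmod q"
  have x0: "0 < x" "x < 1" using q0 q1' by (auto simp: x_def)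
  define g where "g k = x^5 * (x^4)^k" for k
  have fb: "norm (f (k+5)) \<le> g k" for k
  proof (cases "enat (k+5) \<le> n")
    case False then show ?thesis using x0 by (simp add: f_def g_def)
  next
    case True
    have rb: "\<bar>r (k+5)\<bar> \<le> 1" using r[of "k+5"] True by auto
    have ex: "6*k+15 \<le> (k+5)*(k+5+1) div 2"
    proof -
      have "2*(6*k+15) \<le> (k+5)*(k+5+1)" by (simp add: algebra_simps power2_eq_square)
      then show ?thesis using div_le_mono[of "2*(6*k+15)" "(k+5)*(k+5+1)" 2] by simp
    qed
    have "norm (f (k+5)) = \<bar>r (k+5)\<bar> * x ^ ((k+5)*(k+5+1) div 2) * (1/x^2)^(k+5)"
      using True by (simp add: f_def norm_mult norm_power x_def z)
    also have "\<dots> \<le> 1 * x ^ (6*k+15) * (1/x^2)^(k+5)"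
    proof -
      have "x ^ ((k+5)*(k+5+1) div 2) \<le> x ^ (6*k+15)"
        by (rule power_decreasing) (use ex x0 in auto)
      then show ?thesis using rb x0 by (intro mult_right_mono mult_mono) auto
    qed
    also have "\<dots> = g k"
    proof -
      have "x ^ (6*k+15) = x^5 * (x^4)^k * (x^2)^(k+5)"
      proof -
        have e: "6*k+15 = 5 + 4*k + 2*(k+5)" by simp
        show ?thesis unfolding e by (simp only: power_add power_mult)
      qed
      moreover have "(1/x^2)^(k+5) * (x^2)^(k+5) = 1"
      proof -
        have "(1/x^2)^(k+5) * (x^2)^(k+5) = (1/x^2 * x^2)^(k+5)" by (rule power_mult_distrib[symmetric])
        also have "1/x^2 * x^2 = 1" using x0 by simp
        finally show ?thesis by simp
      qed
      ultimately show ?thesis unfolding g_def by (rule aux3)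
    qed
    finally show ?thesis .
  qed
  have sg: "summable g"
  proof -
    have x4: "x^4 < 1" using power_less_one_iff[of x 4] x0 by simp
    have "norm (x^4) < 1" using x4 x0 by simp
    then have "summable (\<lambda>k. (x^4)^k)" by (rule summable_geometric)
    then show ?thesis unfolding g_def by (rule summable_mult)
  qed
  have sn: "summable (\<lambda>k. norm (f (k+5)))"
  proof (rule summable_comparison_test'[OF sg])
    fix k :: nat
    show "norm (norm (f (k+5))) \<le> g k" using fb[of k] by simp
  qed
  have sf5: "summable (\<lambda>k. f (k+5))" by (rule summable_norm_cancel[OF sn])
  have sf: "summable f" by (rule summable_iff_shift[THEN iffD1, OF sf5])
  have f0: "sum f {..<5} = 0" by (simp add: f_def)
  have "suminf f = (\<Sum>k. f (k+5))"
    using suminf_split_initial_segment[OF sf, of 5] f0 by simp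
  then have "cmod (suminf f) \<le> (\<Sum>k. norm (f (k+5)))"
    using summable_norm[OF sn] by simp
  also have "\<dots> \<le> suminf g" by (rule suminf_le[OF fb sn sg])
  also have "suminf g = x^5 / (1 - x^4)"
  proof -
    have x4: "x^4 < 1" using power_less_one_iff[of x 4] x0 by simp
    have "norm (x^4) < 1" using x4 x0 by simp
    then have "(\<lambda>k. (x^4)^k) sums (1 / (1 - x^4))" by (rule geometric_sums)
    then have "g sums (x^5 * (1 / (1 - x^4)))" unfolding g_def by (rule sums_mult)
    then show ?thesis by (simp add: sums_iff)
  qed
  finally show ?thesis by (simp add: x_def)
qed



theorem lemma4:
  fixes n :: enat and r :: "nat \<Rightarrow> real" and q z :: complex
  assumes "5 \<le> n"
    and "\<And>j. 5 \<le> j \<Longrightarrow> enat j \<le> n \<Longrightarrow> r j \<in> {0..1}"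
    and "q \<in> U"
    and "cmod z = 1 / (cmod q) ^ 2"
  shows "theta_r r n q z \<noteq> 0"
proof
  assume th: "theta_r r n q z = 0"
  note qb = q_bounds[OF assms(3)]
  have q0: "q \<noteq> 0" using qb(4) by auto
  have cq: "0 < cmod q" using q0 by simp
  have cq1: "cmod q < 1" using qb(2) by simp
  define w where "w = q^2 * z"
  have wn: "cmod w = 1" using assms(4) cq by (simp add: w_def norm_mult norm_power)
  define P where "P = 1 + q*z + q^3*z^2 + q^6*z^3 + q^10*z^4"
  define f where "f = (\<lambda>j. if 5 \<le> j \<and> enat j \<le> n then complex_of_real (r j) * q ^ (j * (j + 1) div 2) * z ^ j else 0)"
  have thd: "theta_r r n q z = P + suminf f" by (simp add: theta_r_def P_def f_def)
  have qP: "q * P = F q w" unfolding P_def F_def w_def by algebra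
  have "cmod (G w) \<le> cmod (F q w) + cmod (F q w - G w)"
    using norm_triangle_ineq2[of "G w" "F q w"] norm_minus_commute[of "G w" "F q w"] by linarith
  then have Fb: "11/1000 \<le> cmod (F q w)" using circle[OF wn] F_G[OF assms(3) wn] by linarith
  have T: "cmod (suminf f) \<le> cmod q ^ 5 / (1 - cmod q ^ 4)"
    using tail_bound[OF assms(2) cq cq1 assms(4)] by (simp add: f_def)
  have "P = - suminf f" using th thd by (simp add: eq_neg_iff_add_eq_0)
  then have "cmod (F q w) = cmod q * cmod (suminf f)" using qP by (metis norm_minus_cancel norm_mult)
  also have "\<dots> \<le> cmod q * (cmod q ^ 5 / (1 - cmod q ^ 4))"
    using T cq by (intro mult_left_mono) auto
  also have "\<dots> = (cmod q ^ 2)^3 / (1 - (cmod q ^ 2)^2)"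
    by (simp add: power_mult[symmetric] power_Suc[symmetric] del: power_Suc)
  also have "\<dots> < 11/1000"
  proof -
    define s where "s = cmod q ^ 2"
    have s0: "0 \<le> s" "s \<le> 21/100" using qb(3) by (auto simp: s_def)
    have "s^2 \<le> (21/100)^2" using s0 by (intro power_mono) auto
    then have d: "1 - (21/100)^2 \<le> 1 - s^2" by linarith
    have dp: "0 < 1 - (21/100::real)^2" by (simp add: power_divide)
    have "s^3 \<le> (21/100)^3" using s0 by (intro power_mono) auto
    then have "s^3 / (1 - s^2) \<le> (21/100)^3 / (1 - (21/100)^2)"
      using d dp by (intro frac_le) auto
    also have "\<dots> < 11/1000" by (simp add: power_divide)
    finally show ?thesis by (simp add: s_def)
  qed
  finally show False using Fb by linarith
qed

end
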